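(* Let $\mathcal{O}$ be an operad, $A$ a color of $\mathcal{O}$, and $L\subseteq\mathcal{O}(A)$ a regular language of constants. Let $F:\mathcal{P}\to\mathcal{O}$ be a functor of operads and $R$ a color of $\mathcal{P}$ with $F(R)=A$. Then $F^{-1}(L)\cap\mathcal{P}(R)=\{c\in\mathcal{P}(R)\mid F(c)\in L\}$ is a regular language of constants in $\mathcal{P}$.
   Context: Operads are colored, non-symmetric operads; $\mathcal{O}(A)$ denotes the set of constants (nullary operations) of output color $A$. A functor of operads $p:\mathcal{Q}\to\mathcal{O}$ is ULF if for every operation $\alpha$ of $\mathcal{Q}$ and operations $g,h$ of $\mathcal{O}$ and index $i$ with $p(\alpha)=g\circ_i h$ there is a unique pair $\beta,\gamma$ with $\alpha=\beta\circ_i\gamma$, $p(\beta)=g$, $p(\gamma)=h$; it is finitary if its fibers over every color and every operation are finite. A nondeterministic finite-state automaton over $\mathcal{O}$ is a tuple $M=(\mathcal{O},\mathcal{Q},p,q_r)$ with $p:\mathcal{Q}\to\mathcal{O}$ finitary ULF and $q_r$ a color of $\mathcal{Q}$; it recognizes $\{p(\alpha)\mid\alpha\in\mathcal{Q}(q_r)\}\subseteq\mathcal{O}(p(q_r))$. A subset $L\subseteq\mathcal{O}(A)$ is a regular language of constants if it is the language recognized by such an automaton with $p(q_r)=A$. *)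

theory Defs
  imports Main
begin

text \<open>Colored non-symmetric operads, presented by partial compositions.
  An operation f has output color tgt f and list of input colors src f;
  pcomp g i h is the partial composition g \<circ>_i h (0-indexed), meaningful
  when tgt h = src g ! i.\<close>

record ('c, 'o) operad =
  colors :: "'c set"
  opers  :: "'o set"
  tgt    :: "'o \<Rightarrow> 'c"
  src    :: "'o \<Rightarrow> 'c list"
  ident  :: "'c \<Rightarrow> 'o"
  pcomp  :: "'o \<Rightarrow> nat \<Rightarrow> 'o \<Rightarrow> 'o"

definition composable :: "('c, 'o) operad \<Rightarrow> 'o \<Rightarrow> nat \<Rightarrow> 'o \<Rightarrow> bool" where
  "composable Op g i h \<longleftrightarrow> g \<in> opers Op \<and> h \<in> opers Op \<and> i < length (src Op g)
     \<and> tgt Op h = src Op g ! i"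

definition operad :: "('c, 'o) operad \<Rightarrow> bool" where
  "operad Op \<longleftrightarrow>
     (\<forall>f \<in> opers Op. tgt Op f \<in> colors Op \<and> set (src Op f) \<subseteq> colors Op) \<and>
     (\<forall>c \<in> colors Op. ident Op c \<in> opers Op \<and> tgt Op (ident Op c) = c \<and> src Op (ident Op c) = [c]) \<and>
     (\<forall>g i h. composable Op g i h \<longrightarrow>
         pcomp Op g i h \<in> opers Op \<and> tgt Op (pcomp Op g i h) = tgt Op g \<and>
         src Op (pcomp Op g i h) = take i (src Op g) @ src Op h @ drop (Suc i) (src Op g)) \<and>
     (\<forall>f \<in> opers Op. pcomp Op (ident Op (tgt Op f)) 0 f = f) \<and>
     (\<forall>f \<in> opers Op. \<forall>i < length (src Op f). pcomp Op f i (ident Op (src Op f ! i)) = f) \<and>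
     (\<forall>f g h i j. composable Op f i g \<and> composable Op g j h \<longrightarrow>
         pcomp Op (pcomp Op f i g) (i + j) h = pcomp Op f i (pcomp Op g j h)) \<and>
     (\<forall>f g h i j. i < j \<and> composable Op f i g \<and> composable Op f j h \<longrightarrow>
         pcomp Op (pcomp Op f j h) i g = pcomp Op (pcomp Op f i g) (j + length (src Op g) - 1) h)"

definition consts_of :: "('c, 'o) operad \<Rightarrow> 'c \<Rightarrow> 'o set" where
  "consts_of Op A = {f \<in> opers Op. src Op f = [] \<and> tgt Op f = A}"

definition operad_functor ::
  "('c, 'o) operad \<Rightarrow> ('d, 'p) operad \<Rightarrow> ('c \<Rightarrow> 'd) \<Rightarrow> ('o \<Rightarrow> 'p) \<Rightarrow> bool" where
  "operad_functor P Op Fc Fo \<longleftrightarrow>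
     (\<forall>c \<in> colors P. Fc c \<in> colors Op) \<and>
     (\<forall>f \<in> opers P. Fo f \<in> opers Op \<and> tgt Op (Fo f) = Fc (tgt P f)
                     \<and> src Op (Fo f) = map Fc (src P f)) \<and>
     (\<forall>c \<in> colors P. Fo (ident P c) = ident Op (Fc c)) \<and>
     (\<forall>g i h. composable P g i h \<longrightarrow> Fo (pcomp P g i h) = pcomp Op (Fo g) i (Fo h))"

definition ulf :: "('c, 'o) operad \<Rightarrow> ('d, 'p) operad \<Rightarrow> ('c \<Rightarrow> 'd) \<Rightarrow> ('o \<Rightarrow> 'p) \<Rightarrow> bool" where
  "ulf Q Op pc po \<longleftrightarrow>
     (\<forall>\<alpha> \<in> opers Q. \<forall>g h i. composable Op g i h \<and> po \<alpha> = pcomp Op g i h \<longrightarrow>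
        (\<exists>!(\<beta>, \<gamma>). composable Q \<beta> i \<gamma> \<and> \<alpha> = pcomp Q \<beta> i \<gamma> \<and> po \<beta> = g \<and> po \<gamma> = h))"

definition finitary :: "('c, 'o) operad \<Rightarrow> ('d, 'p) operad \<Rightarrow> ('c \<Rightarrow> 'd) \<Rightarrow> ('o \<Rightarrow> 'p) \<Rightarrow> bool" where
  "finitary Q Op pc po \<longleftrightarrow>
     (\<forall>c \<in> colors Op. finite {q \<in> colors Q. pc q = c}) \<and>
     (\<forall>f \<in> opers Op. finite {\<alpha> \<in> opers Q. po \<alpha> = f})"

definition nfa ::
  "('d, 'p) operad \<Rightarrow> ('c, 'o) operad \<Rightarrow> ('c \<Rightarrow> 'd) \<Rightarrow> ('o \<Rightarrow> 'p) \<Rightarrow> 'c \<Rightarrow> bool" where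
  "nfa Op Q pc po qr \<longleftrightarrow> operad Q \<and> operad_functor Q Op pc po \<and> ulf Q Op pc po
     \<and> finitary Q Op pc po \<and> qr \<in> colors Q"

definition recognized ::
  "('d, 'p) operad \<Rightarrow> ('c, 'o) operad \<Rightarrow> ('c \<Rightarrow> 'd) \<Rightarrow> ('o \<Rightarrow> 'p) \<Rightarrow> 'c \<Rightarrow> 'p set" where
  "recognized Op Q pc po qr = po ` consts_of Q qr"

text \<open>L \<subseteq> Op(A) is a regular language of constants, witnessed by an automaton whose
  operad Q has colors of type 'qc and operations of type 'qo.\<close>
definition regular_const ::
  "('qc \<times> 'qo) itself \<Rightarrow> ('d, 'p) operad \<Rightarrow> 'd \<Rightarrow> 'p set \<Rightarrow> bool" where
  "regular_const _ Op A L \<longleftrightarrow>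
     (\<exists>(Q :: ('qc, 'qo) operad) pc po qr.
        nfa Op Q pc po qr \<and> pc qr = A \<and> recognized Op Q pc po qr = L)"

end

theory Submission
  imports Defs
begin

definition pb :: "('qc,'qo) operad \<Rightarrow> ('qo\<Rightarrow>'o) \<Rightarrow> ('pc,'po) operad \<Rightarrow> ('po\<Rightarrow>'o)
   \<Rightarrow> ('qc \<Rightarrow> 'c) \<Rightarrow> ('pc \<Rightarrow> 'c) \<Rightarrow> ('qc\<times>'pc, 'qo\<times>'po) operad" where
"pb Q po P Fo pc Fc = \<lparr>colors = {(q,c). q \<in> colors Q \<and> c \<in> colors P \<and> pc q = Fc c},
   opers = {(a,f). a \<in> opers Q \<and> f \<in> opers P \<and> po a = Fo f},
   tgt = \<lambda>(a,f). (tgt Q a, tgt P f), src = \<lambda>(a,f). zip (src Q a) (src P f),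
   ident = \<lambda>(q,c). (ident Q q, ident P c),
   pcomp = \<lambda>(b,g) i (c,h). (pcomp Q b i c, pcomp P g i h)\<rparr>"

lemma opD:
  assumes "operad Od"
  shows "\<forall>f \<in> opers Od. tgt Od f \<in> colors Od \<and> set (src Od f) \<subseteq> colors Od"
    and "\<forall>c \<in> colors Od. ident Od c \<in> opers Od \<and> tgt Od (ident Od c) = c \<and> src Od (ident Od c) = [c]"
    and "\<forall>g i h. composable Od g i h \<longrightarrow>
         pcomp Od g i h \<in> opers Od \<and> tgt Od (pcomp Od g i h) = tgt Od g \<and>
         src Od (pcomp Od g i h) = take i (src Od g) @ src Od h @ drop (Suc i) (src Od g)"
    and "\<forall>f \<in> opers Od. pcomp Od (ident Od (tgt Od f)) 0 f = f"
    and "\<forall>f \<in> opers Od. \<forall>i < length (src Od f). pcomp Od f i (ident Od (src Od f ! i)) = f"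
    and "\<forall>f g h i j. composable Od f i g \<and> composable Od g j h \<longrightarrow>
         pcomp Od (pcomp Od f i g) (i + j) h = pcomp Od f i (pcomp Od g j h)"
    and "\<forall>f g h i j. i < j \<and> composable Od f i g \<and> composable Od f j h \<longrightarrow>
         pcomp Od (pcomp Od f j h) i g = pcomp Od (pcomp Od f i g) (j + length (src Od g) - 1) h"
  using assms unfolding operad_def apply -
  apply (elim conjE, assumption)+
  done

lemma op_tgt: "operad Od \<Longrightarrow> f \<in> opers Od \<Longrightarrow> tgt Od f \<in> colors Od"
  using opD(1) by blast
lemma op_src: "operad Od \<Longrightarrow> f \<in> opers Od \<Longrightarrow> set (src Od f) \<subseteq> colors Od"
  using opD(1) by blast
lemma op_id: "operad Od \<Longrightarrow> c \<in> colors Od \<Longrightarrow> ident Od c \<in> opers Od \<and> tgt Od (ident Od c) = c \<and> src Od (ident Od c) = [c]"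
  using opD(2) by blast
lemma op_comp: "operad Od \<Longrightarrow> composable Od g i h \<Longrightarrow> pcomp Od g i h \<in> opers Od \<and> tgt Od (pcomp Od g i h) = tgt Od g \<and>
         src Od (pcomp Od g i h) = take i (src Od g) @ src Od h @ drop (Suc i) (src Od g)"
  using opD(3) by blast
lemma op_lunit: "operad Od \<Longrightarrow> f \<in> opers Od \<Longrightarrow> pcomp Od (ident Od (tgt Od f)) 0 f = f"
  using opD(4) by blast
lemma op_runit: "operad Od \<Longrightarrow> f \<in> opers Od \<Longrightarrow> i < length (src Od f) \<Longrightarrow> pcomp Od f i (ident Od (src Od f ! i)) = f"
  using opD(5) by blast
lemma op_assoc: "operad Od \<Longrightarrow> composable Od f i g \<Longrightarrow> composable Od g j h \<Longrightarrow>
         pcomp Od (pcomp Od f i g) (i + j) h = pcomp Od f i (pcomp Od g j h)"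
  using opD(6) by blast
lemma op_inter: "operad Od \<Longrightarrow> i < j \<Longrightarrow> composable Od f i g \<Longrightarrow> composable Od f j h \<Longrightarrow>
         pcomp Od (pcomp Od f j h) i g = pcomp Od (pcomp Od f i g) (j + length (src Od g) - 1) h"
  using opD(7) by blast

locale pbl =
  fixes Q :: "('qc,'qo) operad" and po :: "'qo \<Rightarrow> 'o" and pc :: "'qc \<Rightarrow> 'c"
    and P :: "('pc,'po) operad" and Fo :: "'po \<Rightarrow> 'o" and Fc :: "'pc \<Rightarrow> 'c"
    and Op :: "('c,'o) operad"
  assumes oQ: "operad Q" and oP: "operad P"
    and fQ: "operad_functor Q Op pc po" and fP: "operad_functor P Op Fc Fo"
begin

abbreviation "PB \<equiv> pb Q po P Fo pc Fc"

lemma fsrc: "a \<in> opers Q \<Longrightarrow> src Op (po a) = map pc (src Q a)"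
  using fQ unfolding operad_functor_def by blast
lemma fsrcP: "a \<in> opers P \<Longrightarrow> src Op (Fo a) = map Fc (src P a)"
  using fP unfolding operad_functor_def by blast
lemma ftgt: "a \<in> opers Q \<Longrightarrow> tgt Op (po a) = pc (tgt Q a)"
  using fQ unfolding operad_functor_def by blast
lemma ftgtP: "a \<in> opers P \<Longrightarrow> tgt Op (Fo a) = Fc (tgt P a)"
  using fP unfolding operad_functor_def by blast
lemma fidQ: "a \<in> colors Q \<Longrightarrow> po (ident Q a) = ident Op (pc a)"
  using fQ unfolding operad_functor_def by blast
lemma fidP: "a \<in> colors P \<Longrightarrow> Fo (ident P a) = ident Op (Fc a)"
  using fP unfolding operad_functor_def by blast

lemma len: "a \<in> opers Q \<Longrightarrow> f \<in> opers P \<Longrightarrow> po a = Fo f \<Longrightarrow> length (src Q a) = length (src P f)"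
  using fsrc fsrcP by (metis length_map)

lemma comp_iff: "composable PB (b,g) i (c,h) \<longleftrightarrow>
   composable Q b i c \<and> composable P g i h \<and> po b = Fo g \<and> po c = Fo h"
  using len[of b g] unfolding composable_def pb_def by auto

lemma comp_iff': "composable PB x i y \<longleftrightarrow>
   composable Q (fst x) i (fst y) \<and> composable P (snd x) i (snd y) \<and> po (fst x) = Fo (snd x) \<and> po (fst y) = Fo (snd y)"
  using comp_iff[of "fst x" "snd x" i "fst y" "snd y"] by simp

lemma fQcomp: "composable Q b i c \<Longrightarrow> po (pcomp Q b i c) = pcomp Op (po b) i (po c)"
  using fQ unfolding operad_functor_def by blast
lemma fPcomp: "composable P b i c \<Longrightarrow> Fo (pcomp P b i c) = pcomp Op (Fo b) i (Fo c)"
  using fP unfolding operad_functor_def by blast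

lemma operadPB: "operad PB"
proof -
  have A: "\<forall>f \<in> opers PB. tgt PB f \<in> colors PB \<and> set (src PB f) \<subseteq> colors PB"
  proof
    fix x assume x: "x \<in> opers PB"
    obtain a f where xe: "x = (a,f)" by force
    have a: "a \<in> opers Q" and f: "f \<in> opers P" and e: "po a = Fo f" using x xe by (auto simp: pb_def)
    have l: "length (src Q a) = length (src P f)" using len a f e .
    have m: "map pc (src Q a) = map Fc (src P f)" using fsrc[OF a] fsrcP[OF f] e by simp
    have t: "pc (tgt Q a) = Fc (tgt P f)" using ftgt[OF a] ftgtP[OF f] e by simp
    have "tgt PB x \<in> colors PB" using op_tgt[OF oQ a] op_tgt[OF oP f] t by (simp add: pb_def xe)
    moreover have "set (src PB x) \<subseteq> colors PB"
    proof
      fix y assume "y \<in> set (src PB x)"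
      then obtain k where k: "k < length (src Q a)" "y = (src Q a ! k, src P f ! k)"
        by (auto simp: pb_def xe in_set_zip)
      have "map pc (src Q a) ! k = map Fc (src P f) ! k" using m by simp
      then have pk: "pc (src Q a ! k) = Fc (src P f ! k)" using k(1) l by simp
      have sQ: "set (src Q a) \<subseteq> colors Q" using op_src[OF oQ a] .
      have sP: "set (src P f) \<subseteq> colors P" using op_src[OF oP f] .
      have "src Q a ! k \<in> colors Q" using sQ nth_mem[OF k(1)] by blast
      moreover have "src P f ! k \<in> colors P" using sP nth_mem[of k "src P f"] k(1) l by auto
      ultimately show "y \<in> colors PB" using k pk by (simp add: pb_def)
    qed
    ultimately show "tgt PB x \<in> colors PB \<and> set (src PB x) \<subseteq> colors PB" by blast
  qed
  have B: "\<forall>c \<in> colors PB. ident PB c \<in> opers PB \<and> tgt PB (ident PB c) = c \<and> src PB (ident PB c) = [c]"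
  proof
    fix x assume x: "x \<in> colors PB"
    obtain q c where xe: "x = (q,c)" by force
    have q: "q \<in> colors Q" and c: "c \<in> colors P" and e: "pc q = Fc c" using x xe by (auto simp: pb_def)
    have "po (ident Q q) = Fo (ident P c)" using fidQ[OF q] fidP[OF c] e by simp
    then show "ident PB x \<in> opers PB \<and> tgt PB (ident PB x) = x \<and> src PB (ident PB x) = [x]"
      using op_id[OF oQ q] op_id[OF oP c] by (simp add: pb_def xe)
  qed
  have C: "\<forall>g i h. composable PB g i h \<longrightarrow>
         pcomp PB g i h \<in> opers PB \<and> tgt PB (pcomp PB g i h) = tgt PB g \<and>
         src PB (pcomp PB g i h) = take i (src PB g) @ src PB h @ drop (Suc i) (src PB g)"
  proof (intro allI impI)
    fix x i y assume cc: "composable PB x i y"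
    obtain b g c h where xe: "x = (b,g)" "y = (c,h)" by force
    have cQ: "composable Q b i c" and cP: "composable P g i h" and e1: "po b = Fo g" and e2: "po c = Fo h"
      using cc comp_iff xe by auto
    have l1: "length (src Q b) = length (src P g)" and l2: "length (src Q c) = length (src P h)"
      using len e1 e2 cQ cP unfolding composable_def by auto
    have "po (pcomp Q b i c) = Fo (pcomp P g i h)" using fQcomp[OF cQ] fPcomp[OF cP] e1 e2 by simp
    moreover have "zip (take i (src Q b) @ src Q c @ drop (Suc i) (src Q b)) (take i (src P g) @ src P h @ drop (Suc i) (src P g))
      = take i (zip (src Q b) (src P g)) @ zip (src Q c) (src P h) @ drop (Suc i) (zip (src Q b) (src P g))"
      using l1 l2 by (simp add: zip_append take_zip drop_zip)
    ultimately show "pcomp PB x i y \<in> opers PB \<and> tgt PB (pcomp PB x i y) = tgt PB x \<and>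
         src PB (pcomp PB x i y) = take i (src PB x) @ src PB y @ drop (Suc i) (src PB x)"
      using op_comp[OF oQ cQ] op_comp[OF oP cP] by (simp add: pb_def xe)
  qed
  have D: "\<forall>f \<in> opers PB. pcomp PB (ident PB (tgt PB f)) 0 f = f"
    using op_lunit[OF oQ] op_lunit[OF oP] by (auto simp: pb_def)
  have E: "\<forall>f \<in> opers PB. \<forall>i < length (src PB f). pcomp PB f i (ident PB (src PB f ! i)) = f"
    using op_runit[OF oQ] op_runit[OF oP] by (auto simp: pb_def)
  have F: "\<forall>f g h i j. composable PB f i g \<and> composable PB g j h \<longrightarrow>
         pcomp PB (pcomp PB f i g) (i + j) h = pcomp PB f i (pcomp PB g j h)"
  proof (intro allI impI)
    fix f g h i j assume "composable PB f i g \<and> composable PB g j h"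
    then show "pcomp PB (pcomp PB f i g) (i + j) h = pcomp PB f i (pcomp PB g j h)"
      unfolding comp_iff' using op_assoc[OF oQ] op_assoc[OF oP] by (auto simp: pb_def split: prod.splits)
  qed
  have G: "\<forall>f g h i j. i < j \<and> composable PB f i g \<and> composable PB f j h \<longrightarrow>
         pcomp PB (pcomp PB f j h) i g = pcomp PB (pcomp PB f i g) (j + length (src PB g) - 1) h"
  proof (intro allI impI)
    fix x y z i j assume a: "i < j \<and> composable PB x i y \<and> composable PB x j z"
    obtain f f' g g' h h' where xe: "x = (f,f')" "y = (g,g')" "z = (h,h')" by (metis prod.exhaust)
    have c: "composable Q f i g" "composable Q f j h" "composable P f' i g'" "composable P f' j h'"
      and e: "po g = Fo g'"
      using a comp_iff xe by auto
    have l: "length (src PB y) = length (src Q g)"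
      using len[OF _ _ e] c unfolding composable_def by (simp add: pb_def xe)
    have "length (src Q g) = length (src P g')" using len[OF _ _ e] c unfolding composable_def by simp
    then show "pcomp PB (pcomp PB x j z) i y = pcomp PB (pcomp PB x i y) (j + length (src PB y) - 1) z"
      using l op_inter[OF oQ _ c(1,2)] op_inter[OF oP _ c(3,4)] a by (simp add: pb_def xe)
  qed
  show ?thesis unfolding operad_def by (intro conjI A B C D E F G)
qed

lemma functorPB: "operad_functor PB P snd snd"
  unfolding operad_functor_def
proof (intro conjI ballI allI impI)
  fix x assume "x \<in> colors PB" then show "snd x \<in> colors P" by (auto simp: pb_def)
next
  fix x assume x: "x \<in> opers PB"
  obtain a f where xe: "x = (a,f)" by force
  have a: "a \<in> opers Q" and f: "f \<in> opers P" and e: "po a = Fo f" using x xe by (auto simp: pb_def)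
  have l: "length (src Q a) = length (src P f)" using len a f e .
  show "snd x \<in> opers P" using f xe by simp
  show "tgt P (snd x) = snd (tgt PB x)" by (simp add: pb_def xe)
  show "src P (snd x) = map snd (src PB x)" using l by (simp add: pb_def xe)
next
  fix x assume "x \<in> colors PB" then show "snd (ident PB x) = ident P (snd x)"
    by (auto simp: pb_def)
next
  fix g i h assume "composable PB g i h"
  then show "snd (pcomp PB g i h) = pcomp P (snd g) i (snd h)"
    by (auto simp: pb_def split: prod.splits)
qed

lemma ulfPB: assumes u: "ulf Q Op pc po" shows "ulf PB P snd snd"
  unfolding ulf_def
proof (intro ballI allI impI)
  fix x g h i assume x: "x \<in> opers PB" and gh: "composable P g i h \<and> snd x = pcomp P g i h"
  obtain a f where xe: "x = (a,f)" by force
  have a: "a \<in> opers Q" and f: "f \<in> opers P" and e: "po a = Fo f" using x xe by (auto simp: pb_def)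
  have cP: "composable P g i h" and fe: "f = pcomp P g i h" using gh xe by auto
  have cO: "composable Op (Fo g) i (Fo h)"
    using cP fP unfolding composable_def operad_functor_def by auto
  have "po a = pcomp Op (Fo g) i (Fo h)" using e fe fPcomp[OF cP] by simp
  then have ex: "\<exists>!(\<beta>, \<gamma>). composable Q \<beta> i \<gamma> \<and> a = pcomp Q \<beta> i \<gamma> \<and> po \<beta> = Fo g \<and> po \<gamma> = Fo h"
    using u a cO unfolding ulf_def by blast
  then obtain p where p: "case p of (\<beta>, \<gamma>) \<Rightarrow> composable Q \<beta> i \<gamma> \<and> a = pcomp Q \<beta> i \<gamma> \<and> po \<beta> = Fo g \<and> po \<gamma> = Fo h"
    and pu: "\<And>p'. (case p' of (\<beta>, \<gamma>) \<Rightarrow> composable Q \<beta> i \<gamma> \<and> a = pcomp Q \<beta> i \<gamma> \<and> po \<beta> = Fo g \<and> po \<gamma> = Fo h) \<Longrightarrow> p' = p"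
    by (rule ex1E) blast
  obtain b c where bc: "composable Q b i c" "a = pcomp Q b i c" "po b = Fo g" "po c = Fo h"
     and un: "\<And>b' c'. composable Q b' i c' \<and> a = pcomp Q b' i c' \<and> po b' = Fo g \<and> po c' = Fo h
          \<Longrightarrow> b' = b \<and> c' = c"
  proof -
    obtain b c where pe: "p = (b,c)" by force
    show ?thesis
    proof (rule that[of b c])
      show "composable Q b i c" "a = pcomp Q b i c" "po b = Fo g" "po c = Fo h" using p pe by auto
      fix b' c' assume "composable Q b' i c' \<and> a = pcomp Q b' i c' \<and> po b' = Fo g \<and> po c' = Fo h"
      then have "(b',c') = p" using pu[of "(b',c')"] by simp
      then show "b' = b \<and> c' = c" using pe by simp
    qed
  qed
  show "\<exists>!(\<beta>, \<gamma>). composable PB \<beta> i \<gamma> \<and> x = pcomp PB \<beta> i \<gamma> \<and> snd \<beta> = g \<and> snd \<gamma> = h"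
  proof (rule ex1I[of _ "((b,g),(c,h))"])
    show "case ((b,g),(c,h)) of (\<beta>, \<gamma>) \<Rightarrow> composable PB \<beta> i \<gamma> \<and> x = pcomp PB \<beta> i \<gamma> \<and> snd \<beta> = g \<and> snd \<gamma> = h"
      using comp_iff bc cP xe fe by (auto simp: pb_def)
  next
    fix y assume y: "case y of (\<beta>, \<gamma>) \<Rightarrow> composable PB \<beta> i \<gamma> \<and> x = pcomp PB \<beta> i \<gamma> \<and> snd \<beta> = g \<and> snd \<gamma> = h"
    obtain b' g' c' h' where ye: "y = ((b',g'),(c',h'))" by (metis prod.exhaust)
    have "composable Q b' i c' \<and> a = pcomp Q b' i c' \<and> po b' = Fo g \<and> po c' = Fo h" and gg: "g' = g" "h' = h"
      using y ye comp_iff xe by (auto simp: pb_def)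
    then show "y = ((b,g),(c,h))" using un ye by auto
  qed
qed

lemma finPB: assumes fi: "finitary Q Op pc po" shows "finitary PB P snd snd"
  unfolding finitary_def
proof (intro conjI ballI)
  fix c assume c: "c \<in> colors P"
  have "Fc c \<in> colors Op" using c fP unfolding operad_functor_def by blast
  then have "finite {q \<in> colors Q. pc q = Fc c}" using fi unfolding finitary_def by blast
  then have "finite ({q \<in> colors Q. pc q = Fc c} \<times> {c})" by simp
  moreover have "{q \<in> colors PB. snd q = c} \<subseteq> {q \<in> colors Q. pc q = Fc c} \<times> {c}"
    by (auto simp: pb_def)
  ultimately show "finite {q \<in> colors PB. snd q = c}" by (rule finite_subset[rotated])
next
  fix f assume f: "f \<in> opers P"
  have "Fo f \<in> opers Op" using f fP unfolding operad_functor_def by blast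
  then have "finite {a \<in> opers Q. po a = Fo f}" using fi unfolding finitary_def by blast
  then have "finite ({a \<in> opers Q. po a = Fo f} \<times> {f})" by simp
  moreover have "{q \<in> opers PB. snd q = f} \<subseteq> {a \<in> opers Q. po a = Fo f} \<times> {f}"
    by (auto simp: pb_def)
  ultimately show "finite {q \<in> opers PB. snd q = f}" by (rule finite_subset[rotated])
qed

lemma recPB: "snd ` consts_of PB (qr, R) = {c \<in> consts_of P R. Fo c \<in> po ` consts_of Q qr}"
proof
  show "snd ` consts_of PB (qr, R) \<subseteq> {c \<in> consts_of P R. Fo c \<in> po ` consts_of Q qr}"
  proof
    fix y assume "y \<in> snd ` consts_of PB (qr, R)"
    then obtain a f where af: "(a,f) \<in> consts_of PB (qr,R)" and ye: "y = f" by force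
    have a: "a \<in> opers Q" and f: "f \<in> opers P" and e: "po a = Fo f" 
      and z: "zip (src Q a) (src P f) = []" and t: "tgt Q a = qr" "tgt P f = R"
      using af by (auto simp: pb_def consts_of_def)
    have l: "length (src Q a) = length (src P f)" using len a f e .
    have "src Q a = []" "src P f = []" using z l by (metis length_0_conv length_zip min.idem)+
    then show "y \<in> {c \<in> consts_of P R. Fo c \<in> po ` consts_of Q qr}"
    proof -
      have "a \<in> consts_of Q qr" using a t \<open>src Q a = []\<close> by (simp add: consts_of_def)
      then have "Fo f \<in> po ` consts_of Q qr" using e by (metis image_eqI)
      then show ?thesis using f t ye \<open>src P f = []\<close> by (simp add: consts_of_def)
    qed
  qed
next
  show "{c \<in> consts_of P R. Fo c \<in> po ` consts_of Q qr} \<subseteq> snd ` consts_of PB (qr, R)"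
  proof
    fix c assume "c \<in> {c \<in> consts_of P R. Fo c \<in> po ` consts_of Q qr}"
    then obtain a where c: "c \<in> consts_of P R" and a: "a \<in> consts_of Q qr" "Fo c = po a" by auto
    have "(a,c) \<in> consts_of PB (qr,R)" using c a by (auto simp: consts_of_def pb_def)
    then show "c \<in> snd ` consts_of PB (qr, R)" by force
  qed
qed

end

theorem mainTheorem9:
  fixes Op :: "('c, 'o) operad" and P :: "('pc, 'po) operad"
    and Fc :: "'pc \<Rightarrow> 'c" and Fo :: "'po \<Rightarrow> 'o"
  assumes "operad Op" and "operad P"
    and "A \<in> colors Op"
    and "regular_const TYPE('qc \<times> 'qo) Op A L"
    and "operad_functor P Op Fc Fo"
    and "R \<in> colors P" and "Fc R = A"
  shows "regular_const TYPE(('qc \<times> 'pc) \<times> ('qo \<times> 'po)) P R {c \<in> consts_of P R. Fo c \<in> L}"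
proof -
  obtain Q :: "('qc, 'qo) operad" and pc po qr where n: "nfa Op Q pc po qr" and qA: "pc qr = A"
    and rL: "recognized Op Q pc po qr = L"
    using assms(4) unfolding regular_const_def by blast
  have oQ: "operad Q" and fQ: "operad_functor Q Op pc po" and u: "ulf Q Op pc po"
    and fi: "finitary Q Op pc po" and qr: "qr \<in> colors Q" using n unfolding nfa_def by auto
  interpret pbl Q po pc P Fo Fc Op using oQ assms(2) fQ assms(5) by unfold_locales
  have "nfa P PB snd snd (qr, R)"
    unfolding nfa_def using operadPB functorPB ulfPB[OF u] finPB[OF fi] qr assms(6,7) qA
    by (auto simp: pb_def)
  moreover have "recognized P PB snd snd (qr, R) = {c \<in> consts_of P R. Fo c \<in> L}"
    unfolding recognized_def recPB using rL unfolding recognized_def by simp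
  ultimately show ?thesis unfolding regular_const_def by fastforce
qed

end
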